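(* Let $X$ be a geodesic metric space, $Y$ a quasi-geodesic metric space and $f:Y\to X$ a quasi-isometric embedding. Then $Y$ is stable in $X$ in the sense of Durham--Taylor if and only if $f(Y)$ is $N$-stable as a subspace of $X$ for some Morse gauge $N$.
   Context: $Y$ is quasi-geodesic if there are $K\ge1,C\ge0$ such that any two points of $Y$ are joined by a $(K,C)$-quasi-geodesic in $Y$. $Y$ is stable in $X$ in the sense of Durham--Taylor (with respect to $f$) if for all $K,C$ there is $R=R(K,C)$ such that any two $(K,C)$-quasi-geodesics in $X$ with common endpoints in $f(Y)$ are at Hausdorff distance less than $R$. A Morse gauge is a function $N$ assigning to each $(K,C)$ a number $N(K,C)\ge0$; a geodesic $\gamma$ is $N$-Morse if every $(K,C)$-quasi-geodesic with endpoints on $\gamma$ lies in the $N(K,C)$-neighbourhood of $\gamma$. A subset $Z\subseteq X$ is $N$-stable if it is quasi-convex and any two points of $Z$ are joined by a geodesic of $X$ which is $N$-Morse. *)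

theory Defs
  imports "HOL-Analysis.Analysis"
begin

definition geodesic_seg :: "(real \<Rightarrow> 'a::metric_space) \<Rightarrow> real \<Rightarrow> 'a \<Rightarrow> 'a \<Rightarrow> bool" where
  "geodesic_seg g L a b \<longleftrightarrow> L \<ge> 0 \<and> g 0 = a \<and> g L = b \<and>
     (\<forall>s\<in>{0..L}. \<forall>t\<in>{0..L}. dist (g s) (g t) = \<bar>s - t\<bar>)"

definition geodesic_space :: "'a::metric_space itself \<Rightarrow> bool" where
  "geodesic_space _ \<longleftrightarrow> (\<forall>x y::'a. \<exists>g L. geodesic_seg g L x y)"

definition quasi_geodesic :: "real \<Rightarrow> real \<Rightarrow> (real \<Rightarrow> 'a::metric_space) \<Rightarrow> real \<Rightarrow> real \<Rightarrow> bool" where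
  "quasi_geodesic K C q a b \<longleftrightarrow> a \<le> b \<and>
     (\<forall>s\<in>{a..b}. \<forall>t\<in>{a..b}. \<bar>s - t\<bar> / K - C \<le> dist (q s) (q t) \<and>
                               dist (q s) (q t) \<le> K * \<bar>s - t\<bar> + C)"

definition quasi_geodesic_space :: "'a::metric_space itself \<Rightarrow> bool" where
  "quasi_geodesic_space _ \<longleftrightarrow> (\<exists>K C. K \<ge> 1 \<and> C \<ge> 0 \<and>
     (\<forall>x y::'a. \<exists>q a b. quasi_geodesic K C q a b \<and> q a = x \<and> q b = y))"

definition qi_embedding :: "('b::metric_space \<Rightarrow> 'a::metric_space) \<Rightarrow> bool" where
  "qi_embedding f \<longleftrightarrow> (\<exists>K C. K \<ge> 1 \<and> C \<ge> 0 \<and>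
     (\<forall>x y. dist x y / K - C \<le> dist (f x) (f y) \<and> dist (f x) (f y) \<le> K * dist x y + C))"

definition hausdorff_dist :: "'a::metric_space set \<Rightarrow> 'a set \<Rightarrow> real" where
  "hausdorff_dist A B = max (SUP a\<in>A. infdist a B) (SUP b\<in>B. infdist b A)"

definition DT_stable :: "('b::metric_space \<Rightarrow> 'a::metric_space) \<Rightarrow> bool" where
  "DT_stable f \<longleftrightarrow> (\<forall>K C. K \<ge> 1 \<longrightarrow> C \<ge> 0 \<longrightarrow> (\<exists>R.
     \<forall>q1 a1 b1 q2 a2 b2. quasi_geodesic K C q1 a1 b1 \<longrightarrow> quasi_geodesic K C q2 a2 b2 \<longrightarrow>
        q1 a1 \<in> range f \<longrightarrow> q1 b1 \<in> range f \<longrightarrow> q2 a2 = q1 a1 \<longrightarrow> q2 b2 = q1 b1 \<longrightarrow>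
        hausdorff_dist (q1 ` {a1..b1}) (q2 ` {a2..b2}) < R))"

definition morse_gauge :: "(real \<Rightarrow> real \<Rightarrow> real) \<Rightarrow> bool" where
  "morse_gauge N \<longleftrightarrow> (\<forall>K C. K \<ge> 1 \<longrightarrow> C \<ge> 0 \<longrightarrow> N K C \<ge> 0)"

definition N_morse :: "(real \<Rightarrow> real \<Rightarrow> real) \<Rightarrow> (real \<Rightarrow> 'a::metric_space) \<Rightarrow> real \<Rightarrow> bool" where
  "N_morse N g L \<longleftrightarrow> (\<forall>K C q a b. K \<ge> 1 \<longrightarrow> C \<ge> 0 \<longrightarrow> quasi_geodesic K C q a b \<longrightarrow>
       q a \<in> g ` {0..L} \<longrightarrow> q b \<in> g ` {0..L} \<longrightarrow>
       (\<forall>t\<in>{a..b}. infdist (q t) (g ` {0..L}) \<le> N K C))"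

definition quasi_convex :: "'a::metric_space set \<Rightarrow> bool" where
  "quasi_convex Z \<longleftrightarrow> (\<exists>k\<ge>0. \<forall>x\<in>Z. \<forall>y\<in>Z. \<forall>g L. geodesic_seg g L x y \<longrightarrow>
       (\<forall>t\<in>{0..L}. infdist (g t) Z \<le> k))"

definition N_stable :: "(real \<Rightarrow> real \<Rightarrow> real) \<Rightarrow> 'a::metric_space set \<Rightarrow> bool" where
  "N_stable N Z \<longleftrightarrow> quasi_convex Z \<and>
     (\<forall>x\<in>Z. \<forall>y\<in>Z. \<exists>g L. geodesic_seg g L x y \<and> N_morse N g L)"

end

theory Submission
  imports Defs
begin

lemma infdist_lessE:
  assumes "infdist x A < e" "A \<noteq> {}"
  shows "\<exists>a\<in>A. dist x a < e"
proof -
  have "bdd_below ((\<lambda>a. dist x a) ` A)" by (rule bdd_belowI[of _ 0]) auto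
  then show ?thesis using assms by (simp add: infdist_notempty cINF_less_iff)
qed

lemma geo_qg:
  assumes "\<forall>s\<in>{a..b}. \<forall>t\<in>{a..b}. dist (g s) (g t) = \<bar>s - t\<bar>" "a \<le> b" "K \<ge> 1" "C \<ge> 0"
  shows "quasi_geodesic K C g a b"
  unfolding quasi_geodesic_def
proof (intro conjI ballI)
  fix s t assume st: "s \<in> {a..b}" "t \<in> {a..b}"
  have e: "dist (g s) (g t) = \<bar>s - t\<bar>" using assms st by auto
  have "\<bar>s - t\<bar> * 1 \<le> \<bar>s - t\<bar> * K" by (rule mult_left_mono) (use assms(3) in auto)
  then have "\<bar>s - t\<bar> / K \<le> \<bar>s - t\<bar>" using assms(3) by (simp add: divide_le_eq)
  then show "\<bar>s - t\<bar> / K - C \<le> dist (g s) (g t)" using e assms(4) by linarith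
  have "\<bar>s - t\<bar> * 1 \<le> \<bar>s - t\<bar> * K" by (rule mult_left_mono) (use assms(3) in auto)
  then have "\<bar>s - t\<bar> \<le> K * \<bar>s - t\<bar>" by (simp add: mult.commute)
  then show "dist (g s) (g t) \<le> K * \<bar>s - t\<bar> + C" using e assms(4) by linarith
qed (use assms in auto)

lemma qg_perturb:
  assumes "quasi_geodesic K C q a b" "\<forall>u\<in>{a..b}. dist (q' u) (q u) \<le> D"
  shows "quasi_geodesic K (C + 2*D) q' a b"
  unfolding quasi_geodesic_def
proof (intro conjI ballI)
  show "a \<le> b" using assms unfolding quasi_geodesic_def by auto
  fix s t assume st: "s \<in> {a..b}" "t \<in> {a..b}"
  have q: "\<bar>s - t\<bar> / K - C \<le> dist (q s) (q t)" "dist (q s) (q t) \<le> K * \<bar>s - t\<bar> + C"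
    using assms(1) st unfolding quasi_geodesic_def by auto
  have ds: "dist (q' s) (q s) \<le> D" and dt: "dist (q' t) (q t) \<le> D" using assms(2) st by auto
  have t1: "dist (q' s) (q' t) \<le> dist (q' s) (q s) + dist (q s) (q t) + dist (q t) (q' t)"
    by (metis add.commute add_left_mono dist_triangle order_trans)
  have t2: "dist (q s) (q t) \<le> dist (q s) (q' s) + dist (q' s) (q' t) + dist (q' t) (q t)"
    by (metis add.commute add_left_mono dist_triangle order_trans)
  show "\<bar>s - t\<bar> / K - (C + 2 * D) \<le> dist (q' s) (q' t)"
    using q t2 ds dt by (simp add: dist_commute)
  show "dist (q' s) (q' t) \<le> K * \<bar>s - t\<bar> + (C + 2 * D)"
    using q t1 ds dt by (simp add: dist_commute)
qed

lemma haus_le1: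
  fixes q2 :: "real \<Rightarrow> 'a::metric_space"
  assumes "quasi_geodesic K C q1 a1 b1" "K \<ge> 0" "q2 a2 = q1 a1" "a2 \<le> b2" "u \<in> {a1..b1}"
  shows "infdist (q1 u) (q2 ` {a2..b2}) \<le> hausdorff_dist (q1 ` {a1..b1}) (q2 ` {a2..b2})"
proof -
  let ?B = "q2 ` {a2..b2}"
  have bd: "bdd_above ((\<lambda>x. infdist x ?B) ` (q1 ` {a1..b1}))"
  proof (rule bdd_aboveI[of _ "K * (b1 - a1) + C"])
    fix r assume "r \<in> (\<lambda>x. infdist x ?B) ` (q1 ` {a1..b1})"
    then obtain v where v: "v \<in> {a1..b1}" "r = infdist (q1 v) ?B" by auto
    have "q2 a2 \<in> ?B" using assms(4) by auto
    then have "infdist (q1 v) ?B \<le> dist (q1 v) (q2 a2)" by (rule infdist_le)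
    also have "\<dots> = dist (q1 v) (q1 a1)" using assms(3) by simp
    also have "\<dots> \<le> K * \<bar>v - a1\<bar> + C"
    proof -
      have "\<forall>s\<in>{a1..b1}. \<forall>t\<in>{a1..b1}. dist (q1 s) (q1 t) \<le> K * \<bar>s - t\<bar> + C"
        using assms(1) unfolding quasi_geodesic_def by blast
      moreover have "a1 \<in> {a1..b1}" using v(1) by auto
      ultimately show ?thesis using v(1) by blast
    qed
    also have "\<dots> \<le> K * (b1 - a1) + C" using v(1) assms(2) by (intro add_right_mono mult_left_mono) auto
    finally show "r \<le> K * (b1 - a1) + C" using v by simp
  qed
  have "infdist (q1 u) ?B \<le> (SUP x\<in>q1 ` {a1..b1}. infdist x ?B)"
    using assms(5) bd by (intro cSUP_upper) auto
  then show ?thesis unfolding hausdorff_dist_def by linarith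
qed

lemma haus_sym: "hausdorff_dist A B = hausdorff_dist B A"
  unfolding hausdorff_dist_def by (simp add: max.commute)

lemma infdist_shift:
  assumes "\<forall>w\<in>B. infdist w A \<le> D" "B \<noteq> {}"
  shows "infdist y A \<le> infdist y B + D"
proof -
  have "infdist y A - D \<le> (INF w\<in>B. dist y w)"
  proof (rule cINF_greatest)
    fix w assume "w \<in> B"
    have "infdist y A \<le> infdist w A + dist y w" by (rule infdist_triangle)
    then show "infdist y A - D \<le> dist y w" using assms(1) \<open>w \<in> B\<close> by auto
  qed (use assms in auto)
  then show ?thesis using assms(2) by (simp add: infdist_notempty)
qed


lemma geo_near_qg:
  fixes q g :: "real \<Rightarrow> 'a::metric_space"
  assumes gs: "geodesic_seg g L x y" and qg: "quasi_geodesic K C q a b"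
    and K: "K \<ge> 1" and C: "C \<ge> 0"
    and qa: "q a = g 0" and qb: "q b = g L" and nm: "N_morse N g L" and t: "t \<in> {0..L}"
  shows "infdist (g t) (q ` {a..b}) \<le> 3 * (N K C + 1) + 2 * K + C"
proof -
  define M where "M = N K C + 1"
  have ab: "a \<le> b" using qg unfolding quasi_geodesic_def by auto
  have L0: "L \<ge> 0" using gs unfolding geodesic_seg_def by auto
  have giso: "\<And>s r. s \<in> {0..L} \<Longrightarrow> r \<in> {0..L} \<Longrightarrow> dist (g s) (g r) = \<bar>s - r\<bar>"
    using gs unfolding geodesic_seg_def by auto
  have qup: "\<And>u v. u \<in> {a..b} \<Longrightarrow> v \<in> {a..b} \<Longrightarrow> dist (q u) (q v) \<le> K * \<bar>u - v\<bar> + C"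
    using qg unfolding quasi_geodesic_def by auto
  have near: "\<exists>s\<in>{0..L}. dist (q u) (g s) < M" if u: "u \<in> {a..b}" for u
  proof -
    have "q a \<in> g ` {0..L}" using qa L0 by auto
    moreover have "q b \<in> g ` {0..L}" using qb L0 by auto
    ultimately have "infdist (q u) (g ` {0..L}) \<le> N K C"
      using nm K C qg u unfolding N_morse_def by blast
    then have "infdist (q u) (g ` {0..L}) < M" unfolding M_def by linarith
    then obtain w where "w \<in> g ` {0..L}" "dist (q u) w < M"
      using infdist_lessE[of "q u" "g ` {0..L}" M] L0 by auto
    then show ?thesis by auto
  qed
  define S where "S = {u \<in> {a..b}. \<exists>s\<in>{0..L}. s \<le> t \<and> dist (q u) (g s) < M}"
  have M0: "M > 0"
  proof -
    have "q a \<in> g ` {0..L}" "q b \<in> g ` {0..L}" using qa qb L0 by auto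
    then have "\<forall>t\<in>{a..b}. infdist (q t) (g ` {0..L}) \<le> N K C"
      using nm K C qg unfolding N_morse_def by blast
    then have "infdist (q a) (g ` {0..L}) \<le> N K C" using ab by auto
    then show "M > 0" unfolding M_def using infdist_nonneg[of "q a" "g ` {0..L}"] by linarith
  qed
  have aS: "a \<in> S" unfolding S_def using ab qa t M0 by auto
  have Sbd: "bdd_above S" unfolding S_def by (rule bdd_aboveI[of _ b]) auto
  define us where "us = Sup S"
  have us_ge: "a \<le> us" unfolding us_def using aS Sbd by (rule cSup_upper)
  have us_le: "us \<le> b" unfolding us_def using aS by (intro cSup_least) (auto simp: S_def)
  obtain u1 where u1: "u1 \<in> S" "us - 1 < u1"
    using less_cSupE[of "us - 1" S] aS unfolding us_def by auto
  have u1le: "u1 \<le> us" unfolding us_def using u1(1) Sbd by (rule cSup_upper)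
  obtain s1 where s1: "s1 \<in> {0..L}" "s1 \<le> t" "dist (q u1) (g s1) < M" "u1 \<in> {a..b}"
    using u1(1) unfolding S_def by auto
  obtain u2 s2 where u2: "u2 \<in> {a..b}" "s2 \<in> {0..L}" "t \<le> s2" "dist (q u2) (g s2) < M"
      "\<bar>u2 - u1\<bar> \<le> 2"
  proof (cases "us = b")
    case True
    then show ?thesis using that[of b L] ab L0 t M0 qb u1 u1le s1 by auto
  next
    case False
    define u2 where "u2 = min b (us + 1)"
    have u2ab: "u2 \<in> {a..b}" using us_ge us_le unfolding u2_def by auto
    have "us < u2" using False us_le unfolding u2_def by auto
    then have nS: "u2 \<notin> S" using Sbd unfolding us_def using cSup_upper[of u2 S] by auto
    obtain s2 where s2: "s2 \<in> {0..L}" "dist (q u2) (g s2) < M" using near[OF u2ab] by auto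
    have "t \<le> s2"
    proof (rule ccontr)
      assume "\<not> t \<le> s2"
      then have "s2 \<le> t" by simp
      then have "u2 \<in> S" unfolding S_def using u2ab s2 by blast
      with nS show False by simp
    qed
    moreover have "\<bar>u2 - u1\<bar> \<le> 2" using u1 u1le us_ge \<open>us < u2\<close> unfolding u2_def by auto
    ultimately show ?thesis using that[of u2 s2] u2ab \<open>s2 \<in> {0..L}\<close> \<open>dist (q u2) (g s2) < M\<close> by auto
  qed
  have d12: "dist (q u1) (q u2) \<le> K * 2 + C"
  proof -
    have "dist (q u1) (q u2) \<le> K * \<bar>u1 - u2\<bar> + C" using qup s1(4) u2(1) by auto
    also have "\<dots> \<le> K * 2 + C" using u2(5) K by (intro add_right_mono mult_left_mono) auto
    finally show ?thesis .
  qed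
  have "s2 - s1 = dist (g s1) (g s2)" using giso[OF s1(1) u2(2)] s1(2) u2(3) by auto
  also have "\<dots> \<le> dist (g s1) (q u1) + dist (q u1) (q u2) + dist (q u2) (g s2)"
    by (metis add_right_mono dist_triangle order_trans)
  finally have sd: "s2 - s1 < 2 * M + K * 2 + C" using s1(3) u2(4) d12 by (simp add: dist_commute)
  have "dist (g t) (g s1) = t - s1" using giso[OF t s1(1)] s1(2) by auto
  have "infdist (g t) (q ` {a..b}) \<le> dist (g t) (q u1)" using s1(4) by (intro infdist_le) auto
  also have "\<dots> \<le> dist (g t) (g s1) + dist (g s1) (q u1)" by (rule dist_triangle)
  finally show ?thesis using \<open>dist (g t) (g s1) = t - s1\<close> sd s1(3) u2(3) unfolding M_def
    by (simp add: dist_commute)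
qed


lemma dir2:
  fixes f :: "'b::metric_space \<Rightarrow> 'a::metric_space"
  assumes mg: "morse_gauge N" and st: "N_stable N (range f)"
  shows "DT_stable f"
  unfolding DT_stable_def
proof (intro allI impI)
  fix K C :: real assume K: "K \<ge> 1" and C: "C \<ge> 0"
  define M where "M = N K C + 1"
  define D where "D = 3 * (N K C + 1) + 2 * K + C"
  show "\<exists>R. \<forall>q1 a1 b1 q2 a2 b2. quasi_geodesic K C q1 a1 b1 \<longrightarrow> quasi_geodesic K C q2 a2 b2 \<longrightarrow>
        q1 a1 \<in> range f \<longrightarrow> q1 b1 \<in> range f \<longrightarrow> q2 a2 = q1 a1 \<longrightarrow> q2 b2 = q1 b1 \<longrightarrow>
        hausdorff_dist (q1 ` {a1..b1}) (q2 ` {a2..b2}) < R"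
  proof (intro exI[of _ "M + D + 1"] allI impI)
    fix q1 q2 :: "real \<Rightarrow> 'a" and a1 b1 a2 b2
    assume q1: "quasi_geodesic K C q1 a1 b1" and q2: "quasi_geodesic K C q2 a2 b2"
      and x: "q1 a1 \<in> range f" and y: "q1 b1 \<in> range f" and e1: "q2 a2 = q1 a1" and e2: "q2 b2 = q1 b1"
    obtain g L where gs: "geodesic_seg g L (q1 a1) (q1 b1)" and nm: "N_morse N g L"
      using st x y unfolding N_stable_def by blast
    have L0: "L \<ge> 0" and g0: "g 0 = q1 a1" and gL: "g L = q1 b1"
      using gs unfolding geodesic_seg_def by auto
    have side: "infdist (p u) (p' ` {c'..d'}) \<le> M + D"
      if p: "quasi_geodesic K C p c d" and p': "quasi_geodesic K C p' c' d'"
        and pc: "p c = g 0" and pd: "p d = g L" and pc': "p' c' = g 0" and pd': "p' d' = g L"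
        and u: "u \<in> {c..d}" for p p' :: "real \<Rightarrow> 'a" and c d c' d' u
    proof -
      have "p c \<in> g ` {0..L}" "p d \<in> g ` {0..L}" using pc pd L0 by auto
      then have "\<forall>t\<in>{c..d}. infdist (p t) (g ` {0..L}) \<le> N K C"
        using nm K C p unfolding N_morse_def by blast
      then have "infdist (p u) (g ` {0..L}) < M" using u unfolding M_def by fastforce
      then obtain w where "w \<in> g ` {0..L}" "dist (p u) w < M"
        using infdist_lessE[of "p u" "g ` {0..L}" M] L0 by auto
      then obtain s where s: "s \<in> {0..L}" "dist (p u) (g s) < M" by auto
      have "infdist (g s) (p' ` {c'..d'}) \<le> D"
        unfolding D_def by (rule geo_near_qg[OF gs p' K C pc' pd' nm s(1)])
      moreover have "infdist (p u) (p' ` {c'..d'}) \<le> infdist (g s) (p' ` {c'..d'}) + dist (p u) (g s)"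
        by (rule infdist_triangle)
      ultimately show ?thesis using s(2) by linarith
    qed
    have ab1: "a1 \<le> b1" using q1 unfolding quasi_geodesic_def by auto
    have ab2: "a2 \<le> b2" using q2 unfolding quasi_geodesic_def by auto
    have h1: "(SUP x\<in>q1 ` {a1..b1}. infdist x (q2 ` {a2..b2})) \<le> M + D"
      using ab1 by (intro cSUP_least) (auto intro!: side[OF q1 q2] simp: g0 gL e1 e2)
    have h2: "(SUP x\<in>q2 ` {a2..b2}. infdist x (q1 ` {a1..b1})) \<le> M + D"
      using ab2 by (intro cSUP_least) (auto intro!: side[OF q2 q1] simp: g0 gL e1 e2)
    show "hausdorff_dist (q1 ` {a1..b1}) (q2 ` {a2..b2}) < M + D + 1"
      unfolding hausdorff_dist_def using h1 h2 by simp
  qed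
qed


lemma geo_sub:
  fixes g :: "real \<Rightarrow> 'a::metric_space"
  assumes gs: "geodesic_seg g L x y" and s: "s \<in> {0..L}" and t: "t \<in> {0..L}"
  shows "\<forall>v\<in>{0..\<bar>t - s\<bar>}. s + sgn (t - s) * v \<in> {0..L}"
    and "\<forall>v\<in>{0..\<bar>t - s\<bar>}. \<forall>w\<in>{0..\<bar>t - s\<bar>}.
           dist (g (s + sgn (t - s) * v)) (g (s + sgn (t - s) * w)) = \<bar>v - w\<bar>"
proof -
  have iso: "\<And>a b. a \<in> {0..L} \<Longrightarrow> b \<in> {0..L} \<Longrightarrow> dist (g a) (g b) = \<bar>a - b\<bar>"
    using gs unfolding geodesic_seg_def by auto
  have mem: "\<forall>v\<in>{0..\<bar>t - s\<bar>}. s + sgn (t - s) * v \<in> {0..L}"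
  proof (cases "s < t")
    case True then show ?thesis using s t by auto
  next
    case False
    then have "t < s \<or> t = s" by auto
    then show ?thesis using s t by auto
  qed
  show "\<forall>v\<in>{0..\<bar>t - s\<bar>}. s + sgn (t - s) * v \<in> {0..L}" by (rule mem)
  show "\<forall>v\<in>{0..\<bar>t - s\<bar>}. \<forall>w\<in>{0..\<bar>t - s\<bar>}.
           dist (g (s + sgn (t - s) * v)) (g (s + sgn (t - s) * w)) = \<bar>v - w\<bar>"
  proof (intro ballI)
    fix v w assume v: "v \<in> {0..\<bar>t - s\<bar>}" and w: "w \<in> {0..\<bar>t - s\<bar>}"
    have "dist (g (s + sgn (t - s) * v)) (g (s + sgn (t - s) * w)) =
          \<bar>(s + sgn (t - s) * v) - (s + sgn (t - s) * w)\<bar>"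
      using mem v w by (intro iso) auto
    also have "\<dots> = \<bar>v - w\<bar>"
    proof (cases "s < t")
      case True then show ?thesis by simp
    next
      case False
      then have "t < s \<or> t = s" by auto
      then show ?thesis using v w by (auto simp: abs_if)
    qed
    finally show "dist (g (s + sgn (t - s) * v)) (g (s + sgn (t - s) * w)) = \<bar>v - w\<bar>" .
  qed
qed

lemma qg_comp:
  fixes f :: "'b::metric_space \<Rightarrow> 'a::metric_space"
  assumes Kf: "Kf \<ge> 1" and Cf: "Cf \<ge> 0"
    and fq: "\<forall>x y. dist x y / Kf - Cf \<le> dist (f x) (f y) \<and> dist (f x) (f y) \<le> Kf * dist x y + Cf"
    and q: "quasi_geodesic KY CY q a b" and KY: "KY \<ge> 1" and CY: "CY \<ge> 0"
  shows "quasi_geodesic (Kf * KY) (Kf * CY + Cf) (f \<circ> q) a b"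
  unfolding quasi_geodesic_def
proof (intro conjI ballI)
  show "a \<le> b" using q unfolding quasi_geodesic_def by auto
  fix s t assume st: "s \<in> {a..b}" "t \<in> {a..b}"
  have ql: "\<bar>s - t\<bar> / KY - CY \<le> dist (q s) (q t)" and qu: "dist (q s) (q t) \<le> KY * \<bar>s - t\<bar> + CY"
    using q st unfolding quasi_geodesic_def by auto
  have fl: "dist (q s) (q t) / Kf - Cf \<le> dist (f (q s)) (f (q t))"
    and fu: "dist (f (q s)) (f (q t)) \<le> Kf * dist (q s) (q t) + Cf" using fq by auto
  have "Kf * dist (q s) (q t) \<le> Kf * (KY * \<bar>s - t\<bar> + CY)" using qu Kf by (intro mult_left_mono) auto
  then show "dist ((f \<circ> q) s) ((f \<circ> q) t) \<le> Kf * KY * \<bar>s - t\<bar> + (Kf * CY + Cf)"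
    using fu by (simp add: algebra_simps)
  have "(\<bar>s - t\<bar> / KY - CY) / Kf \<le> dist (q s) (q t) / Kf" using ql Kf by (intro divide_right_mono) auto
  moreover have "(\<bar>s - t\<bar> / KY - CY) / Kf = \<bar>s - t\<bar> / (Kf * KY) - CY / Kf"
    using Kf KY by (simp add: field_simps)
  moreover have "CY / Kf \<le> CY" using Kf CY by (simp add: divide_le_eq mult_le_cancel_left1)
  moreover have "CY \<le> Kf * CY" using Kf CY by (simp add: mult_le_cancel_right1)
  ultimately show "\<bar>s - t\<bar> / (Kf * KY) - (Kf * CY + Cf) \<le> dist ((f \<circ> q) s) ((f \<circ> q) t)"
    using fl by simp
qed


lemma dir1:
  fixes f :: "'b::metric_space \<Rightarrow> 'a::metric_space"
  assumes geo: "geodesic_space TYPE('a)"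
    and qgs: "quasi_geodesic_space TYPE('b)"
    and qi: "qi_embedding f" and dt: "DT_stable f"
  shows "\<exists>N. morse_gauge N \<and> N_stable N (range f)"
proof -
  obtain Kf Cf where Kf: "Kf \<ge> 1" and Cf: "Cf \<ge> 0"
    and fq: "\<forall>x y. dist x y / Kf - Cf \<le> dist (f x) (f y) \<and> dist (f x) (f y) \<le> Kf * dist x y + Cf"
    using qi unfolding qi_embedding_def by blast
  obtain KY CY where KY: "KY \<ge> 1" and CY: "CY \<ge> 0"
    and yq: "\<forall>x y::'b. \<exists>q a b. quasi_geodesic KY CY q a b \<and> q a = x \<and> q b = y"
    using qgs unfolding quasi_geodesic_space_def by blast
  obtain Rf where Rf: "\<And>K C. K \<ge> 1 \<Longrightarrow> C \<ge> 0 \<Longrightarrow>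
     (\<forall>q1 a1 b1 q2 a2 b2. quasi_geodesic K C q1 a1 b1 \<longrightarrow> quasi_geodesic K C q2 a2 b2 \<longrightarrow>
        q1 a1 \<in> range f \<longrightarrow> q1 b1 \<in> range f \<longrightarrow> q2 a2 = q1 a1 \<longrightarrow> q2 b2 = q1 b1 \<longrightarrow>
        hausdorff_dist (q1 ` {a1..b1}) (q2 ` {a2..b2}) < Rf K C)"
    using dt unfolding DT_stable_def by metis
  define K0 where "K0 = Kf * KY"
  define C0 where "C0 = Kf * CY + Cf"
  have K0: "K0 \<ge> 1" unfolding K0_def using Kf KY by (metis mult_mono' mult_1 order_trans zero_le_one)
  have C0: "C0 \<ge> 0" unfolding C0_def using Kf Cf CY by simp
  define R0 where "R0 = Rf K0 C0"
  have qc: "infdist (g r) (range f) \<le> R0"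
    if gs: "geodesic_seg g L x y" and x: "x \<in> range f" and y: "y \<in> range f" and r: "r \<in> {0..L}"
    for g :: "real \<Rightarrow> 'a" and L x y r
  proof -
    obtain y1 y2 where y1: "x = f y1" and y2: "y = f y2" using x y by auto
    obtain q a b where q: "quasi_geodesic KY CY q a b" "q a = y1" "q b = y2" using yq by blast
    have fqg: "quasi_geodesic K0 C0 (f \<circ> q) a b"
      unfolding K0_def C0_def by (rule qg_comp[OF Kf Cf fq q(1) KY CY])
    have L0: "L \<ge> 0" and g0: "g 0 = x" and gL: "g L = y"
      using gs unfolding geodesic_seg_def by auto
    have gqg: "quasi_geodesic K0 C0 g 0 L"
      using gs L0 K0 C0 unfolding geodesic_seg_def by (intro geo_qg) auto
    have ab: "a \<le> b" using q(1) unfolding quasi_geodesic_def by auto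
    have "hausdorff_dist (g ` {0..L}) ((f \<circ> q) ` {a..b}) < R0"
      unfolding R0_def
      by (rule Rf[OF K0 C0, rule_format, OF gqg fqg]) (use g0 gL x y q y1 y2 in auto)
    moreover have "infdist (g r) ((f \<circ> q) ` {a..b}) \<le> hausdorff_dist (g ` {0..L}) ((f \<circ> q) ` {a..b})"
      using gqg K0 ab r q y1 g0 by (intro haus_le1) auto
    moreover have "infdist (g r) (range f) \<le> infdist (g r) ((f \<circ> q) ` {a..b})"
      using ab by (intro infdist_mono) auto
    ultimately show ?thesis by linarith
  qed
  define D0 where "D0 = max 0 R0 + 1"
  have D0: "D0 > 0" unfolding D0_def by simp
  define N where "N = (\<lambda>K C. max 0 (Rf K (C + 2 * D0)) + 2 * D0)"
  have mg: "morse_gauge N" unfolding morse_gauge_def N_def using D0 by auto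
  have quasi: "quasi_convex (range f)"
    unfolding quasi_convex_def
    by (rule exI[of _ "max 0 R0"]) (auto intro: order_trans[OF qc])
  have morse: "N_morse N g L" if gs: "geodesic_seg g L x y" and x: "x \<in> range f" and y: "y \<in> range f"
    for g :: "real \<Rightarrow> 'a" and L x y
    unfolding N_morse_def
  proof (intro allI impI ballI)
    fix K C q a b u
    assume K: "K \<ge> 1" and C: "C \<ge> 0" and q: "quasi_geodesic K C q a b"
      and qa: "q a \<in> g ` {0..L}" and qb: "q b \<in> g ` {0..L}" and u: "u \<in> {a..b}"
    obtain s t where s: "s \<in> {0..L}" "q a = g s" and t: "t \<in> {0..L}" "q b = g t" using qa qb by auto
    have iso: "\<And>a b. a \<in> {0..L} \<Longrightarrow> b \<in> {0..L} \<Longrightarrow> dist (g a) (g b) = \<bar>a - b\<bar>"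
      using gs unfolding geodesic_seg_def by auto
    have "\<forall>r\<in>{0..L}. \<exists>p\<in>range f. dist (g r) p < D0"
    proof
      fix r assume r: "r \<in> {0..L}"
      have "infdist (g r) (range f) < D0" using qc[OF gs x y r] unfolding D0_def by linarith
      then show "\<exists>p\<in>range f. dist (g r) p < D0" by (intro infdist_lessE) auto
    qed
    then obtain pf where pf: "\<And>r. r \<in> {0..L} \<Longrightarrow> pf r \<in> range f \<and> dist (g r) (pf r) < D0"
      by metis
    have ab: "a \<le> b" using q unfolding quasi_geodesic_def by auto
    have st_eq: "s = t" if "a = b"
    proof -
      have "dist (g s) (g t) = 0" using that s t by simp
      then show ?thesis using iso[OF s(1) t(1)] by simp
    qed
    define q' where "q' = (\<lambda>v. if v = a then pf s else if v = b then pf t else q v)"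
    have q'd: "\<forall>v\<in>{a..b}. dist (q' v) (q v) \<le> D0"
      using pf[OF s(1)] pf[OF t(1)] s t unfolding q'_def using D0 by (auto simp: dist_commute less_imp_le)
    have q'qg: "quasi_geodesic K (C + 2 * D0) q' a b" by (rule qg_perturb[OF q q'd])
    define \<rho> where "\<rho> = (\<lambda>v. g (s + sgn (t - s) * v))"
    define \<rho>' where "\<rho>' = (\<lambda>v. if v = 0 then pf s else if v = \<bar>t - s\<bar> then pf t else \<rho> v)"
    note gsub = geo_sub[OF gs s(1) t(1)]
    have \<rho>qg: "quasi_geodesic K C \<rho> 0 \<bar>t - s\<bar>"
      using gsub(2) K C unfolding \<rho>_def by (intro geo_qg) auto
    have \<rho>0: "\<rho> 0 = g s" unfolding \<rho>_def by simp
    have \<rho>L: "\<rho> \<bar>t - s\<bar> = g t" unfolding \<rho>_def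
      using sgn_mult_abs[of "t - s"] by simp
    have \<rho>'d: "\<forall>v\<in>{0..\<bar>t - s\<bar>}. dist (\<rho>' v) (\<rho> v) \<le> D0"
      using pf[OF s(1)] pf[OF t(1)] \<rho>0 \<rho>L unfolding \<rho>'_def using D0 by (auto simp: dist_commute less_imp_le)
    have \<rho>'qg: "quasi_geodesic K (C + 2 * D0) \<rho>' 0 \<bar>t - s\<bar>" by (rule qg_perturb[OF \<rho>qg \<rho>'d])
    have KC: "C + 2 * D0 \<ge> 0" using C D0 by simp
    have q'a: "q' a = pf s" unfolding q'_def by simp
    have q'b: "q' b = pf t" unfolding q'_def using st_eq by auto
    have \<rho>'0: "\<rho>' 0 = pf s" unfolding \<rho>'_def by simp
    have \<rho>'L: "\<rho>' \<bar>t - s\<bar> = pf t" unfolding \<rho>'_def by auto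
    have H: "hausdorff_dist (q' ` {a..b}) (\<rho>' ` {0..\<bar>t - s\<bar>}) < Rf K (C + 2 * D0)"
      using Rf[OF K KC] q'qg \<rho>'qg q'a q'b \<rho>'0 \<rho>'L pf[OF s(1)] pf[OF t(1)] by auto
    have h1: "infdist (q' u) (\<rho>' ` {0..\<bar>t - s\<bar>}) \<le> hausdorff_dist (q' ` {a..b}) (\<rho>' ` {0..\<bar>t - s\<bar>})"
      using q'qg K u q'a \<rho>'0 by (intro haus_le1) auto
    have h2: "infdist (q' u) (g ` {0..L}) \<le> infdist (q' u) (\<rho>' ` {0..\<bar>t - s\<bar>}) + D0"
    proof (rule infdist_shift)
      show "\<rho>' ` {0..\<bar>t - s\<bar>} \<noteq> {}" by auto
      show "\<forall>w\<in>\<rho>' ` {0..\<bar>t - s\<bar>}. infdist w (g ` {0..L}) \<le> D0"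
      proof
        fix w assume "w \<in> \<rho>' ` {0..\<bar>t - s\<bar>}"
        then obtain v where v: "v \<in> {0..\<bar>t - s\<bar>}" "w = \<rho>' v" by auto
        have "\<rho> v \<in> g ` {0..L}" using gsub(1) v(1) unfolding \<rho>_def by auto
        then show "infdist w (g ` {0..L}) \<le> D0" using \<rho>'d v by (intro infdist_le2) auto
      qed
    qed
    have h3: "infdist (q u) (g ` {0..L}) \<le> infdist (q' u) (g ` {0..L}) + dist (q u) (q' u)"
      by (rule infdist_triangle)
    have h4: "dist (q u) (q' u) \<le> D0" using q'd u by (simp add: dist_commute)
    show "infdist (q u) (g ` {0..L}) \<le> N K C"
      using H h1 h2 h3 h4 unfolding N_def by linarith
  qed
  have "N_stable N (range f)"
    unfolding N_stable_def
  proof (intro conjI quasi ballI)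
    fix x y assume x: "x \<in> range f" and y: "y \<in> range f"
    obtain g L where "geodesic_seg g L x y" using geo unfolding geodesic_space_def by blast
    then show "\<exists>g L. geodesic_seg g L x y \<and> N_morse N g L" using morse x y by blast
  qed
  then show ?thesis using mg by blast
qed

theorem lemma3p8:
  fixes f :: "'b::metric_space \<Rightarrow> 'a::metric_space"
  assumes "geodesic_space TYPE('a)"
    and "quasi_geodesic_space TYPE('b)"
    and "qi_embedding f"
  shows "DT_stable f \<longleftrightarrow> (\<exists>N. morse_gauge N \<and> N_stable N (range f))"
  using dir1[OF assms] dir2 by blast

end
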